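(* Let $G$ act properly on a countable set $S$. Then for every invariant $m:S\times S\to[0,\infty]$, $$\sum_{b,b'\in O}\sum_{s\in Gb'}m(b,s)\,\lambda(G_{s,s})=\sum_{b,b'\in O}\sum_{s\in Gb'}\lambda(G_{b',b'})\,m(s,b),$$ and if $G$ is unimodular, moreover $$\sum_{b\in O}\frac{1}{\lambda(G_{b,b})}\sum_{s\in S}m(b,s)=\sum_{b\in O}\frac{1}{\lambda(G_{b,b})}\sum_{s\in S}m(s,b).$$
   Context: $G$ is a locally compact second countable Hausdorff group with left Haar measure $\lambda$. $S$ is countable (with its power set), $G$ acts measurably on $S$, and the action is proper: with $\mu_s$ the image of $\lambda$ under $g\mapsto gs$, there is a partition $B_1,B_2,\dots$ of $S$ with $\mu_s(B_n)<\infty$ for all $s,n$. $G_{s,t}=\{g:gs=t\}$. $O$ is a system of representatives of the orbits $Gs$. $m$ is invariant if $m(gs,gt)=m(s,t)$ for all $g,s,t$. $G$ is unimodular if its left Haar measure is also right invariant. *)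

theory Defs
  imports "HOL-Analysis.Analysis" "HOL-Probability.Probability"
begin

text \<open>The group G is a type 'g of class topological_group_add (written additively;
  group_add does NOT require commutativity). Locally compact, second countable, Hausdorff.\<close>

definition lcsc_group :: "'g::{topological_group_add, t2_space, second_countable_topology} itself \<Rightarrow> bool" where
  "lcsc_group _ \<longleftrightarrow> locally_compact_space (euclidean :: 'g topology)"

definition left_haar_measure :: "'g::{topological_group_add, t2_space, second_countable_topology} measure \<Rightarrow> bool" where
  "left_haar_measure L \<longleftrightarrow>
     sets L = sets borel \<and>
     (\<forall>g A. A \<in> sets borel \<longrightarrow> emeasure L ((\<lambda>x. g + x) ` A) = emeasure L A) \<and>
     (\<forall>K. compact K \<longrightarrow> emeasure L K < \<infinity>) \<and>
     (\<forall>U. open U \<and> U \<noteq> {} \<longrightarrow> emeasure L U > 0)"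

definition unimodular :: "'g::{topological_group_add, t2_space, second_countable_topology} measure \<Rightarrow> bool" where
  "unimodular L \<longleftrightarrow> (\<forall>g A. A \<in> sets borel \<longrightarrow> emeasure L ((\<lambda>x. x + g) ` A) = emeasure L A)"

definition measurable_action :: "('g::{topological_group_add, t2_space, second_countable_topology} \<Rightarrow> 's::countable \<Rightarrow> 's) \<Rightarrow> bool" where
  "measurable_action act \<longleftrightarrow>
     (\<forall>s. act 0 s = s) \<and> (\<forall>g h s. act (g + h) s = act g (act h s)) \<and>
     (\<lambda>(g, s). act g s) \<in> measurable (borel \<Otimes>\<^sub>M count_space UNIV) (count_space UNIV)"

definition orbit_measure :: "'g measure \<Rightarrow> ('g \<Rightarrow> 's \<Rightarrow> 's) \<Rightarrow> 's \<Rightarrow> 's measure" where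
  "orbit_measure L act s = distr L (count_space UNIV) (\<lambda>g. act g s)"

definition proper_action :: "'g measure \<Rightarrow> ('g \<Rightarrow> 's \<Rightarrow> 's) \<Rightarrow> bool" where
  "proper_action L act \<longleftrightarrow>
     (\<exists>B :: nat \<Rightarrow> 's set. disjoint_family B \<and> (\<Union>n. B n) = UNIV \<and>
        (\<forall>s n. emeasure (orbit_measure L act s) (B n) < \<infinity>))"

definition transporter :: "('g \<Rightarrow> 's \<Rightarrow> 's) \<Rightarrow> 's \<Rightarrow> 's \<Rightarrow> 'g set" where
  "transporter act s t = {g. act g s = t}"

definition orbit :: "('g \<Rightarrow> 's \<Rightarrow> 's) \<Rightarrow> 's \<Rightarrow> 's set" where
  "orbit act s = range (\<lambda>g. act g s)"

definition orbit_representatives :: "('g \<Rightarrow> 's \<Rightarrow> 's) \<Rightarrow> 's set \<Rightarrow> bool" where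
  "orbit_representatives act R \<longleftrightarrow> (\<forall>s. \<exists>!b. b \<in> R \<and> b \<in> orbit act s)"

definition invariant_kernel :: "('g \<Rightarrow> 's \<Rightarrow> 's) \<Rightarrow> ('s \<Rightarrow> 's \<Rightarrow> ennreal) \<Rightarrow> bool" where
  "invariant_kernel act m \<longleftrightarrow> (\<forall>g s t. m (act g s) (act g t) = m s t)"

end

theory Submission
  imports Defs
begin

lemma infsum_nn:
  fixes f :: "'a \<Rightarrow> ennreal"
  assumes A: "countable A"
  shows "infsum f A = (\<integral>\<^sup>+x. f x \<partial>count_space A)"
proof (rule antisym)
  have sup: "infsum f A = (SUP F\<in>{F. finite F \<and> F\<subseteq>A}. sum f F)"
    by (rule nonneg_infsum_complete) auto
  have le: "sum f F \<le> infsum f A" if "finite F" "F \<subseteq> A" for F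
    unfolding sup using that by (intro SUP_upper) auto
  show "infsum f A \<le> (\<integral>\<^sup>+x. f x \<partial>count_space A)"
    unfolding sup
  proof (rule SUP_least)
    fix F assume F: "F \<in> {F. finite F \<and> F\<subseteq>A}"
    have "sum f F = (\<integral>\<^sup>+x. f x * indicator F x \<partial>count_space A)"
      using F by (subst nn_integral_count_space'[of F]) (auto intro!: sum.cong)
    also have "\<dots> \<le> (\<integral>\<^sup>+x. f x \<partial>count_space A)"
      by (intro nn_integral_mono) (auto simp: indicator_def)
    finally show "sum f F \<le> (\<integral>\<^sup>+x. f x \<partial>count_space A)" .
  qed
  show "(\<integral>\<^sup>+x. f x \<partial>count_space A) \<le> infsum f A"
  proof (cases "finite A")
    case True
    then show ?thesis by (simp add: nn_integral_count_space_finite)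
  next
    case False
    note bij = bij_betw_from_nat_into[OF A False]
    have "(\<integral>\<^sup>+x. f x \<partial>count_space A) = (\<integral>\<^sup>+n. f (from_nat_into A n) \<partial>count_space UNIV)"
      by (simp add: nn_integral_bij_count_space[symmetric, OF bij])
    also have "\<dots> = (\<Sum>n. f (from_nat_into A n))"
      by (rule nn_integral_count_space_nat)
    also have "\<dots> = (SUP n. \<Sum>i<n. f (from_nat_into A i))"
      by (rule suminf_eq_SUP)
    also have "\<dots> \<le> infsum f A"
    proof (rule SUP_least)
      fix n
      have inj: "inj_on (from_nat_into A) {..<n}"
        using bij by (auto simp: bij_betw_def inj_on_def)
      have "(\<Sum>i<n. f (from_nat_into A i)) = sum f (from_nat_into A ` {..<n})"
        using inj by (simp add: sum.reindex)
      also have "\<dots> \<le> infsum f A"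
        using bij by (intro le) (auto simp: bij_betw_def)
      finally show "(\<Sum>i<n. f (from_nat_into A i)) \<le> infsum f A" .
    qed
    finally show ?thesis .
  qed
qed

lemma infsum_swap_enn:
  fixes f :: "'a::countable \<Rightarrow> 'b::countable \<Rightarrow> ennreal"
  shows "(\<Sum>\<^sub>\<infinity>x\<in>A. \<Sum>\<^sub>\<infinity>y\<in>B. f x y) = (\<Sum>\<^sub>\<infinity>y\<in>B. \<Sum>\<^sub>\<infinity>x\<in>A. f x y)"
proof -
  have cA: "countable A" and cB: "countable B" by (auto intro: countable_subset[OF _ countableI_type])
  show ?thesis
    by (simp add: infsum_nn[OF cA] infsum_nn[OF cB])
       (rule nn_integral_count_space_nn_integral[OF cB], simp)
qed

lemma infsum_cmult_enn:
  fixes f :: "'a::countable \<Rightarrow> ennreal"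
  shows "(\<Sum>\<^sub>\<infinity>x\<in>A. c * f x) = c * (\<Sum>\<^sub>\<infinity>x\<in>A. f x)"
proof -
  have cA: "countable A" by (auto intro: countable_subset[OF _ countableI_type])
  show ?thesis by (simp add: infsum_nn[OF cA] nn_integral_cmult)
qed

lemma push:
  fixes L :: "'g measure" and \<phi> :: "'g \<Rightarrow> 's::countable" and F :: "'s \<Rightarrow> ennreal"
  assumes meas: "\<phi> \<in> measurable L (count_space UNIV)"
  shows "(\<integral>\<^sup>+g. F (\<phi> g) \<partial>L) = (\<Sum>\<^sub>\<infinity>s\<in>UNIV. F s * emeasure L (\<phi> -` {s} \<inter> space L))"
proof -
  have ind: "(\<lambda>g. indicator {s} (\<phi> g) :: ennreal) \<in> borel_measurable L" for s
    by (rule measurable_compose[OF meas]) simp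
  have "(\<integral>\<^sup>+g. F (\<phi> g) \<partial>L) = (\<integral>\<^sup>+g. (\<integral>\<^sup>+s. F s * indicator {s} (\<phi> g) \<partial>count_space UNIV) \<partial>L)"
  proof (intro nn_integral_cong)
    fix x
    show "F (\<phi> x) = (\<integral>\<^sup>+s. F s * indicator {s} (\<phi> x) \<partial>count_space UNIV)"
      by (subst nn_integral_count_space'[of "{\<phi> x}"]) (auto simp: indicator_def)
  qed
  also have "\<dots> = (\<integral>\<^sup>+s. (\<integral>\<^sup>+g. F s * indicator {s} (\<phi> g) \<partial>L) \<partial>count_space UNIV)"
  proof (intro nn_integral_count_space_nn_integral)
    fix s :: 's
    note ind[of s, measurable]
    show "(\<lambda>g. F s * indicator {s} (\<phi> g)) \<in> borel_measurable L" by measurable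
  qed simp
  also have "\<dots> = (\<integral>\<^sup>+s. F s * emeasure L (\<phi> -` {s} \<inter> space L) \<partial>count_space UNIV)"
  proof (intro nn_integral_cong)
    fix s
    have "(\<integral>\<^sup>+g. F s * indicator {s} (\<phi> g) \<partial>L) = (\<integral>\<^sup>+g. F s * indicator (\<phi> -` {s} \<inter> space L) g \<partial>L)"
      by (intro nn_integral_cong) (auto simp: indicator_def)
    also have "\<dots> = F s * emeasure L (\<phi> -` {s} \<inter> space L)"
      by (rule nn_integral_cmult_indicator) (use meas in \<open>auto simp: measurable_def\<close>)
    finally show "(\<integral>\<^sup>+g. F s * indicator {s} (\<phi> g) \<partial>L) = F s * emeasure L (\<phi> -` {s} \<inter> space L)" .
  qed
  also have "\<dots> = (\<Sum>\<^sub>\<infinity>s\<in>UNIV. F s * emeasure L (\<phi> -` {s} \<inter> space L))"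
    by (rule infsum_nn[symmetric]) simp
  finally show ?thesis .
qed

locale act_setup =
  fixes L :: "'g::{topological_group_add, t2_space, second_countable_topology} measure"
    and act :: "'g \<Rightarrow> 's::countable \<Rightarrow> 's"
  assumes haar: "left_haar_measure L"
    and ma: "measurable_action act"
begin

lemma sL: "sets L = sets borel" using haar by (simp add: left_haar_measure_def)
lemma spL[simp]: "space L = UNIV" using sets_eq_imp_space_eq[OF sL] by simp
lemma act0[simp]: "act 0 s = s" using ma by (simp add: measurable_action_def)
lemma act_add: "act (g + h) s = act g (act h s)" using ma by (simp add: measurable_action_def)
lemma act_inv1[simp]: "act (-g) (act g s) = s" by (metis act0 act_add left_minus)
lemma act_inv2[simp]: "act g (act (-g) s) = s" by (metis act0 act_add right_minus)

lemma meas_act: "(\<lambda>g. act g s) \<in> measurable L (count_space UNIV)"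
proof -
  have j: "(\<lambda>(g, s). act g s) \<in> measurable (borel \<Otimes>\<^sub>M count_space UNIV) (count_space UNIV)"
    using ma by (simp add: measurable_action_def)
  have "(\<lambda>g. act g s) \<in> measurable borel (count_space UNIV)"
    using measurable_comp[OF measurable_Pair2'[of s "count_space UNIV" borel] j]
    by (simp add: o_def)
  then show ?thesis by (subst measurable_cong_sets[OF sL refl])
qed

lemma meas_act_inv: "(\<lambda>g. act (-g) s) \<in> measurable L (count_space UNIV)"
proof -
  have "uminus \<in> measurable L L"
    using measurable_cong_sets[OF sL sL] 
    by (simp add: borel_measurable_continuous_onI continuous_on_minus continuous_on_id)
  from measurable_comp[OF this meas_act] show ?thesis by (simp add: o_def)
qed

lemma T_sets: "transporter act s t \<in> sets L"
proof -
  have "(\<lambda>g. act g s) -` {t} \<inter> space L \<in> sets L"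
    using meas_act by (auto simp: measurable_def)
  then show ?thesis by (simp add: transporter_def vimage_def)
qed

lemma T_empty: "t \<notin> orbit act s \<Longrightarrow> transporter act s t = {}"
  by (auto simp: transporter_def orbit_def)

lemma T_coset:
  assumes "act g0 s = t"
  shows "emeasure L (transporter act s t) = emeasure L (transporter act s s)"
proof -
  have "transporter act s t = (\<lambda>x. g0 + x) ` transporter act s s"
  proof (intro set_eqI iffI)
    fix g assume "g \<in> transporter act s t"
    then have "act g s = t" by (simp add: transporter_def)
    then have "act (-g0 + g) s = s" using assms by (metis act_add act_inv1)
    moreover have "g = g0 + (-g0 + g)" by (simp add: add.assoc[symmetric])
    ultimately show "g \<in> (\<lambda>x. g0 + x) ` transporter act s s"
      by (intro image_eqI[of _ _ "-g0 + g"]) (auto simp: transporter_def)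
  next
    fix g assume "g \<in> (\<lambda>x. g0 + x) ` transporter act s s"
    then show "g \<in> transporter act s t" using assms by (auto simp: transporter_def act_add)
  qed
  moreover have "transporter act s s \<in> sets borel" using T_sets sL by simp
  ultimately show ?thesis using haar by (simp add: left_haar_measure_def)
qed

lemma core:
  assumes inv: "invariant_kernel act m"
  shows "(\<Sum>\<^sub>\<infinity>s\<in>UNIV. m b s * emeasure L (transporter act s b'))
       = (\<Sum>\<^sub>\<infinity>u\<in>UNIV. m u b' * emeasure L (transporter act b u))"
proof -
  have "(\<integral>\<^sup>+g. m (act g b) b' \<partial>L) = (\<Sum>\<^sub>\<infinity>u\<in>UNIV. m u b' * emeasure L ((\<lambda>g. act g b) -` {u} \<inter> space L))"
    by (rule push[OF meas_act])
  also have "\<dots> = (\<Sum>\<^sub>\<infinity>u\<in>UNIV. m u b' * emeasure L (transporter act b u))"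
    by (simp add: transporter_def vimage_def)
  finally have 1: "(\<integral>\<^sup>+g. m (act g b) b' \<partial>L) = \<dots>" .
  have "(\<integral>\<^sup>+g. m (act g b) b' \<partial>L) = (\<integral>\<^sup>+g. m b (act (-g) b') \<partial>L)"
  proof (intro nn_integral_cong)
    fix g
    have "m (act g b) b' = m (act (-g) (act g b)) (act (-g) b')"
      using inv[unfolded invariant_kernel_def, rule_format, of "-g" "act g b" b'] by simp
    then show "m (act g b) b' = m b (act (-g) b')" by simp
  qed
  also have "\<dots> = (\<Sum>\<^sub>\<infinity>s\<in>UNIV. m b s * emeasure L ((\<lambda>g. act (-g) b') -` {s} \<inter> space L))"
    by (rule push[OF meas_act_inv])
  also have "\<dots> = (\<Sum>\<^sub>\<infinity>s\<in>UNIV. m b s * emeasure L (transporter act s b'))"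
  proof -
    have "(\<lambda>g. act (-g) b') -` {s} \<inter> space L = transporter act s b'" for s
      by (auto simp: transporter_def)
    then show ?thesis by simp
  qed
  finally show ?thesis using 1 by simp
qed

lemma T_rev:
  assumes "s \<in> orbit act b'"
  shows "emeasure L (transporter act s b') = emeasure L (transporter act s s)"
proof -
  obtain k where "s = act k b'" using assms by (auto simp: orbit_def)
  then have "act (-k) s = b'" by simp
  then show ?thesis by (rule T_coset)
qed

lemma T_rev_empty: "s \<notin> orbit act b' \<Longrightarrow> transporter act s b' = {}"
proof -
  assume a: "s \<notin> orbit act b'"
  have "act g s \<noteq> b'" for g
  proof
    assume "act g s = b'"
    then have "s = act (-g) b'" by (metis act_inv1)
    then show False using a by (auto simp: orbit_def)
  qed
  then show ?thesis by (auto simp: transporter_def)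
qed

lemma pair1:
  assumes inv: "invariant_kernel act m"
  shows "(\<Sum>\<^sub>\<infinity>s\<in>orbit act b'. m b s * emeasure L (transporter act s s))
       = (\<Sum>\<^sub>\<infinity>u\<in>orbit act b. emeasure L (transporter act b b) * m u b')"
proof -
  have "(\<Sum>\<^sub>\<infinity>s\<in>orbit act b'. m b s * emeasure L (transporter act s s))
      = (\<Sum>\<^sub>\<infinity>s\<in>UNIV. m b s * emeasure L (transporter act s b'))"
    by (intro infsum_cong_neutral) (auto simp: T_rev T_rev_empty)
  also have "\<dots> = (\<Sum>\<^sub>\<infinity>u\<in>UNIV. m u b' * emeasure L (transporter act b u))"
    by (rule core[OF inv])
  also have "\<dots> = (\<Sum>\<^sub>\<infinity>u\<in>orbit act b. emeasure L (transporter act b b) * m u b')"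
  proof (intro infsum_cong_neutral)
    fix u assume "u \<in> UNIV \<inter> orbit act b"
    then obtain k where "act k b = u" by (auto simp: orbit_def)
    then show "m u b' * emeasure L (transporter act b u) = emeasure L (transporter act b b) * m u b'"
      by (simp add: T_coset mult.commute)
  qed (auto simp: T_empty)
  finally show ?thesis .
qed

lemma pair2:
  assumes inv: "invariant_kernel act m" and uni: "unimodular L"
  shows "emeasure L (transporter act b' b') * (\<Sum>\<^sub>\<infinity>s\<in>orbit act b'. m b s)
       = emeasure L (transporter act b b) * (\<Sum>\<^sub>\<infinity>u\<in>orbit act b. m u b')"
proof -
  have U: "emeasure L (transporter act s b') = emeasure L (transporter act b' b')"
    if so: "s \<in> orbit act b'" for s
  proof -
    obtain k where k: "s = act k b'" using so by (auto simp: orbit_def)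
    have "transporter act s b' = (\<lambda>x. x + -k) ` transporter act b' b'"
    proof (intro set_eqI iffI)
      fix g assume "g \<in> transporter act s b'"
      then have "act (g + k) b' = b'" using k by (simp add: transporter_def act_add)
      moreover have "g = (g + k) + -k" by (simp add: add.assoc)
      ultimately show "g \<in> (\<lambda>x. x + -k) ` transporter act b' b'"
        by (intro image_eqI[of _ _ "g + k"]) (auto simp: transporter_def)
    next
      fix g assume "g \<in> (\<lambda>x. x + -k) ` transporter act b' b'"
      then obtain x where "act x b' = b'" "g = x + -k" by (auto simp: transporter_def)
      then show "g \<in> transporter act s b'" using k
        by (simp add: transporter_def act_add[symmetric] add.assoc)
    qed
    moreover have "transporter act b' b' \<in> sets borel" using T_sets sL by simp
    ultimately show ?thesis using uni unfolding unimodular_def by metis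
  qed
  have "emeasure L (transporter act b' b') * (\<Sum>\<^sub>\<infinity>s\<in>orbit act b'. m b s)
      = (\<Sum>\<^sub>\<infinity>s\<in>orbit act b'. m b s * emeasure L (transporter act b' b'))"
    by (subst infsum_cmult_enn[symmetric]) (simp add: mult.commute)
  also have "\<dots> = (\<Sum>\<^sub>\<infinity>s\<in>UNIV. m b s * emeasure L (transporter act s b'))"
    by (intro infsum_cong_neutral) (auto simp: U T_rev_empty)
  also have "\<dots> = (\<Sum>\<^sub>\<infinity>u\<in>UNIV. m u b' * emeasure L (transporter act b u))"
    by (rule core[OF inv])
  also have "\<dots> = (\<Sum>\<^sub>\<infinity>u\<in>orbit act b. emeasure L (transporter act b b) * m u b')"
  proof (intro infsum_cong_neutral)
    fix u assume "u \<in> UNIV \<inter> orbit act b"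
    then obtain k where "act k b = u" by (auto simp: orbit_def)
    then show "m u b' * emeasure L (transporter act b u) = emeasure L (transporter act b b) * m u b'"
      by (simp add: T_coset mult.commute)
  qed (auto simp: T_empty)
  also have "\<dots> = emeasure L (transporter act b b) * (\<Sum>\<^sub>\<infinity>u\<in>orbit act b. m u b')"
    by (rule infsum_cmult_enn)
  finally show ?thesis .
qed

lemma h_fin:
  assumes "proper_action L act"
  shows "emeasure L (transporter act s s) < \<infinity>"
proof -
  obtain B :: "nat \<Rightarrow> 's set" where B: "(\<Union>n. B n) = UNIV" "\<And>n. emeasure (orbit_measure L act s) (B n) < \<infinity>"
    using assms by (auto simp: proper_action_def)
  obtain n where n: "s \<in> B n" using B(1) by blast
  have "emeasure (orbit_measure L act s) (B n) = emeasure L ((\<lambda>g. act g s) -` B n \<inter> space L)"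
    unfolding orbit_measure_def by (rule emeasure_distr[OF meas_act]) simp
  moreover have "emeasure L (transporter act s s) \<le> emeasure L ((\<lambda>g. act g s) -` B n \<inter> space L)"
    using n meas_act by (intro emeasure_mono) (auto simp: transporter_def measurable_def)
  ultimately show ?thesis using B(2)[of n] by (metis order.strict_trans1)
qed

lemma h_pos: "emeasure L (transporter act s s) > 0"
proof (rule ccontr)
  assume "\<not> ?thesis"
  then have z: "emeasure L (transporter act s s) = 0" by simp
  have pos: "emeasure L UNIV > 0" using haar by (simp add: left_haar_measure_def)
  have zt: "emeasure L ((\<lambda>g. act g s) -` {t} \<inter> space L) = 0" for t
  proof (cases "t \<in> orbit act s")
    case True
    then obtain k where "act k s = t" by (auto simp: orbit_def)
    then have "emeasure L (transporter act s t) = 0" using z by (simp add: T_coset)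
    then show ?thesis by (simp add: transporter_def vimage_def)
  next
    case False
    then show ?thesis using T_empty[OF False] by (simp add: transporter_def vimage_def)
  qed
  have "(\<integral>\<^sup>+g. (\<lambda>_. 1::ennreal) (act g s) \<partial>L)
     = (\<Sum>\<^sub>\<infinity>t\<in>UNIV. (\<lambda>_. 1::ennreal) t * emeasure L ((\<lambda>g. act g s) -` {t} \<inter> space L))"
    by (rule push[OF meas_act])
  also have "\<dots> = 0" by (simp only: zt mult_zero_right infsum_0)
  finally have "(\<integral>\<^sup>+g. 1 \<partial>L) = 0" by simp
  then have "emeasure L (space L) = 0" by (simp add: nn_integral_const)
  then show False using pos by simp

qed

lemma orbit_sym: "b \<in> orbit act s \<longleftrightarrow> s \<in> orbit act b"
proof -
  have "b \<in> orbit act s \<Longrightarrow> s \<in> orbit act b" for b s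
  proof -
    assume "b \<in> orbit act s"
    then obtain g where "b = act g s" by (auto simp: orbit_def)
    then have "s = act (-g) b" by simp
    then show ?thesis by (auto simp: orbit_def)
  qed
  then show ?thesis by blast
qed

lemma partition_sum:
  fixes f :: "'s \<Rightarrow> ennreal"
  assumes R: "orbit_representatives act Reps"
  shows "(\<Sum>\<^sub>\<infinity>b'\<in>Reps. \<Sum>\<^sub>\<infinity>s\<in>orbit act b'. f s) = (\<Sum>\<^sub>\<infinity>s\<in>UNIV. f s)"
proof -
  have "(\<Sum>\<^sub>\<infinity>b'\<in>Reps. \<Sum>\<^sub>\<infinity>s\<in>orbit act b'. f s)
      = (\<Sum>\<^sub>\<infinity>b'\<in>Reps. \<Sum>\<^sub>\<infinity>s\<in>UNIV. (if s \<in> orbit act b' then f s else 0))"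
  proof (rule infsum_cong)
    fix b' show "(\<Sum>\<^sub>\<infinity>s\<in>orbit act b'. f s) = (\<Sum>\<^sub>\<infinity>s\<in>UNIV. (if s \<in> orbit act b' then f s else 0))"
      by (rule infsum_cong_neutral) auto
  qed
  also have "\<dots> = (\<Sum>\<^sub>\<infinity>s\<in>UNIV. \<Sum>\<^sub>\<infinity>b'\<in>Reps. (if s \<in> orbit act b' then f s else 0))"
    by (rule infsum_swap_enn)
  also have "\<dots> = (\<Sum>\<^sub>\<infinity>s\<in>UNIV. f s)"
  proof (intro infsum_cong)
    fix s
    obtain b0 where b0': "b0 \<in> Reps" "b0 \<in> orbit act s"
      and u': "\<And>b. b \<in> Reps \<Longrightarrow> b \<in> orbit act s \<Longrightarrow> b = b0"
    proof -
      have "\<exists>!b. b \<in> Reps \<and> b \<in> orbit act s" using R by (simp add: orbit_representatives_def)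
      then show ?thesis using that by blast
    qed
    have b0: "b0 \<in> Reps" "s \<in> orbit act b0" using b0' orbit_sym by (blast, blast)
    have u: "\<And>b. b \<in> Reps \<Longrightarrow> s \<in> orbit act b \<Longrightarrow> b = b0" using u' orbit_sym by blast
    have "(\<Sum>\<^sub>\<infinity>b'\<in>Reps. (if s \<in> orbit act b' then f s else 0))
        = (\<Sum>\<^sub>\<infinity>b'\<in>{b0}. (if s \<in> orbit act b' then f s else 0))"
    proof (rule infsum_cong_neutral)
      fix x assume "x \<in> Reps - {b0}"
      then have "s \<notin> orbit act x" using u by blast
      then show "(if s \<in> orbit act x then f s else 0) = 0" by simp
    qed (use b0 in auto)
    also have "\<dots> = f s" using b0 by simp
    finally show "(\<Sum>\<^sub>\<infinity>b'\<in>Reps. (if s \<in> orbit act b' then f s else 0)) = f s" .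
  qed
  finally show ?thesis .
qed

lemma inv_cancel_enn:
  fixes a X :: ennreal
  assumes "0 < a" "a < \<infinity>"
  shows "(1 / a) * (a * X) = X"
proof -
  have "(1 / a) * a = 1" using assms by (simp add: ennreal_divide_times)
  then show ?thesis by (metis mult.assoc mult_1)
qed

end

theorem corollary6p6:
  fixes L :: "'g::{topological_group_add, t2_space, second_countable_topology} measure"
    and act :: "'g \<Rightarrow> 's::countable \<Rightarrow> 's"
    and Reps :: "'s set"
    and m :: "'s \<Rightarrow> 's \<Rightarrow> ennreal"
  assumes "lcsc_group TYPE('g)"
    and "left_haar_measure L"
    and "measurable_action act"
    and "proper_action L act"
    and "orbit_representatives act Reps"
    and "invariant_kernel act m"
  shows "((\<Sum>\<^sub>\<infinity>b\<in>Reps. \<Sum>\<^sub>\<infinity>b'\<in>Reps. \<Sum>\<^sub>\<infinity>s\<in>orbit act b'.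
            m b s * emeasure L (transporter act s s))
       = (\<Sum>\<^sub>\<infinity>b\<in>Reps. \<Sum>\<^sub>\<infinity>b'\<in>Reps. \<Sum>\<^sub>\<infinity>s\<in>orbit act b'.
            emeasure L (transporter act b' b') * m s b)) \<and>
         (unimodular L \<longrightarrow>
         (\<Sum>\<^sub>\<infinity>b\<in>Reps. (1 / emeasure L (transporter act b b)) * (\<Sum>\<^sub>\<infinity>s\<in>UNIV. m b s))
       = (\<Sum>\<^sub>\<infinity>b\<in>Reps. (1 / emeasure L (transporter act b b)) * (\<Sum>\<^sub>\<infinity>s\<in>UNIV. m s b)))"
proof -
  interpret act_setup L act using assms(2,3) by unfold_locales
  note R = assms(5) and inv = assms(6)
  let ?h = "\<lambda>s. emeasure L (transporter act s s)"
  have P1: "(\<Sum>\<^sub>\<infinity>b\<in>Reps. \<Sum>\<^sub>\<infinity>b'\<in>Reps. \<Sum>\<^sub>\<infinity>s\<in>orbit act b'. m b s * ?h s)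
       = (\<Sum>\<^sub>\<infinity>b\<in>Reps. \<Sum>\<^sub>\<infinity>b'\<in>Reps. \<Sum>\<^sub>\<infinity>s\<in>orbit act b'. ?h b' * m s b)"
  proof -
    have "(\<Sum>\<^sub>\<infinity>b\<in>Reps. \<Sum>\<^sub>\<infinity>b'\<in>Reps. \<Sum>\<^sub>\<infinity>s\<in>orbit act b'. m b s * ?h s)
        = (\<Sum>\<^sub>\<infinity>b\<in>Reps. \<Sum>\<^sub>\<infinity>b'\<in>Reps. \<Sum>\<^sub>\<infinity>u\<in>orbit act b. ?h b * m u b')"
      by (intro infsum_cong pair1[OF inv])
    also have "\<dots> = (\<Sum>\<^sub>\<infinity>b'\<in>Reps. \<Sum>\<^sub>\<infinity>b\<in>Reps. \<Sum>\<^sub>\<infinity>u\<in>orbit act b. ?h b * m u b')"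
      by (rule infsum_swap_enn)
    finally show ?thesis .
  qed
  have P2: "(\<Sum>\<^sub>\<infinity>b\<in>Reps. (1 / ?h b) * (\<Sum>\<^sub>\<infinity>s\<in>UNIV. m b s))
       = (\<Sum>\<^sub>\<infinity>b\<in>Reps. (1 / ?h b) * (\<Sum>\<^sub>\<infinity>s\<in>UNIV. m s b))" if uni: "unimodular L"
  proof -
    have key: "(1 / ?h b) * (\<Sum>\<^sub>\<infinity>s\<in>orbit act b'. m b s) = (1 / ?h b') * (\<Sum>\<^sub>\<infinity>u\<in>orbit act b. m u b')"
      for b b'
    proof -
      have e: "?h b' * (\<Sum>\<^sub>\<infinity>s\<in>orbit act b'. m b s) = ?h b * (\<Sum>\<^sub>\<infinity>u\<in>orbit act b. m u b')"
        by (rule pair2[OF inv uni])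
      have "(1 / ?h b) * (\<Sum>\<^sub>\<infinity>s\<in>orbit act b'. m b s)
          = (1 / ?h b) * ((1 / ?h b') * (?h b' * (\<Sum>\<^sub>\<infinity>s\<in>orbit act b'. m b s)))"
        using h_pos h_fin[OF assms(4)] by (simp add: inv_cancel_enn)
      also have "\<dots> = (1 / ?h b') * ((1 / ?h b) * (?h b * (\<Sum>\<^sub>\<infinity>u\<in>orbit act b. m u b')))"
        by (simp only: e mult.assoc mult.left_commute)
      also have "\<dots> = (1 / ?h b') * (\<Sum>\<^sub>\<infinity>u\<in>orbit act b. m u b')"
        using h_pos h_fin[OF assms(4)] by (simp add: inv_cancel_enn)
      finally show ?thesis .
    qed
    have "(\<Sum>\<^sub>\<infinity>b\<in>Reps. (1 / ?h b) * (\<Sum>\<^sub>\<infinity>s\<in>UNIV. m b s))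
        = (\<Sum>\<^sub>\<infinity>b\<in>Reps. (1 / ?h b) * (\<Sum>\<^sub>\<infinity>b'\<in>Reps. \<Sum>\<^sub>\<infinity>s\<in>orbit act b'. m b s))"
      by (simp add: partition_sum[OF R])
    also have "\<dots> = (\<Sum>\<^sub>\<infinity>b\<in>Reps. \<Sum>\<^sub>\<infinity>b'\<in>Reps. (1 / ?h b) * (\<Sum>\<^sub>\<infinity>s\<in>orbit act b'. m b s))"
      by (simp add: infsum_cmult_enn)
    also have "\<dots> = (\<Sum>\<^sub>\<infinity>b\<in>Reps. \<Sum>\<^sub>\<infinity>b'\<in>Reps. (1 / ?h b') * (\<Sum>\<^sub>\<infinity>u\<in>orbit act b. m u b'))"
      by (simp only: key)
    also have "\<dots> = (\<Sum>\<^sub>\<infinity>b'\<in>Reps. \<Sum>\<^sub>\<infinity>b\<in>Reps. (1 / ?h b') * (\<Sum>\<^sub>\<infinity>u\<in>orbit act b. m u b'))"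
      by (rule infsum_swap_enn)
    also have "\<dots> = (\<Sum>\<^sub>\<infinity>b'\<in>Reps. (1 / ?h b') * (\<Sum>\<^sub>\<infinity>u\<in>UNIV. m u b'))"
      by (simp add: infsum_cmult_enn partition_sum[OF R])
    finally show ?thesis .
  qed
  show ?thesis using P1 P2 by blast
qed

end
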